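(* Let $M>1$, $\tau>0$, $\kappa\in(0,1)$, $T>0$. Let $p\in C^2(\mathbb{R})$ with $p(x)\in(p_{min},1]$ for all $x$ (some $p_{min}\ge0$), and $0\le p'(x)\le c_p(1-p(x))$, $|p''(x)|\le c_p(1-p(x))$ for all $x$, for some $c_p>0$. Let $f_0\ge0$ with $\int_{\mathbb{R}}f_0\,dx=1$, $\int_{\mathbb{R}}pf_0^2\,dx<\infty$, and let $f\ge0$ be a sufficiently regular function on $\mathbb{R}\times[0,T]$ (smooth, with $f,\partial_xf$ decaying as $|x|\to\infty$ so that integrations by parts produce no boundary terms) with $f(\cdot,0)=f_0$ solving \[ \partial_tf+\frac{M-1}{\sqrt\tau}a(t)\partial_x(pf)-\frac{(M-1)^2}{2}\Big(a^2(t)+\frac{1}{M-1}b(t)\Big)\partial^2_{xx}(pf)=0, \] with $a(t)=\int(\kappa-p)f\,dx$, $b(t)=\int pf\,dx\int(1-p)f\,dx$. Set $\alpha(t)=\int_{\mathbb{R}}p f\,dx$ and $\beta(t)=\int_{\mathbb{R}}(1-p)pf\,dx$. Then there is $c_0$ depending only on $c_p$, $\tau$ and $M$ such that \[ |\alpha'(t)|\le c_0\beta(t),\qquad |\beta'(t)|\le c_0\beta(t),\qquad t>0, \] and in particular $\beta(t)\ge\beta(0)e^{-c_0t}$ for $t>0$. *)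

theory Defs
  imports "HOL-Analysis.Analysis"
begin

definition admissible_p ::
  "real \<Rightarrow> real \<Rightarrow> (real \<Rightarrow> real) \<Rightarrow> (real \<Rightarrow> real) \<Rightarrow> (real \<Rightarrow> real) \<Rightarrow> bool" where
  "admissible_p cp pmin p p1 p2 \<longleftrightarrow>
     pmin \<ge> 0 \<and>
     (\<forall>x. (p has_real_derivative p1 x) (at x)) \<and>
     (\<forall>x. (p1 has_real_derivative p2 x) (at x)) \<and>
     continuous_on UNIV p2 \<and>
     (\<forall>x. pmin < p x \<and> p x \<le> 1) \<and>
     (\<forall>x. 0 \<le> p1 x \<and> p1 x \<le> cp * (1 - p x) \<and> \<bar>p2 x\<bar> \<le> cp * (1 - p x))"

definition admissible_f0 :: "(real \<Rightarrow> real) \<Rightarrow> (real \<Rightarrow> real) \<Rightarrow> bool" where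
  "admissible_f0 p f0 \<longleftrightarrow>
     (\<forall>x. 0 \<le> f0 x) \<and> integrable lborel f0 \<and> (LINT x|lborel. f0 x) = 1 \<and>
     integrable lborel (\<lambda>x. p x * (f0 x)\<^sup>2)"

text \<open>Regularity of f = f(x,t) on R x [0,T]: ft, fx, fxx are the partial derivatives
  (time derivative one-sided at the endpoints), all of them integrable in x for every t,
  the time derivative is locally (in t) dominated by an integrable function of x
  (so that one may differentiate under the integral sign), and f, f_x vanish
  as |x| \<rightarrow> \<infinity> (no boundary terms in integrations by parts).\<close>
definition regular_sol ::
  "real \<Rightarrow> (real \<Rightarrow> real \<Rightarrow> real) \<Rightarrow> (real \<Rightarrow> real \<Rightarrow> real) \<Rightarrow> (real \<Rightarrow> real \<Rightarrow> real)
     \<Rightarrow> (real \<Rightarrow> real \<Rightarrow> real) \<Rightarrow> bool" where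
  "regular_sol T f ft fx fxx \<longleftrightarrow>
     (\<forall>t\<in>{0..T}. \<forall>x.
        ((\<lambda>s. f x s) has_real_derivative ft x t) (at t within {0..T}) \<and>
        ((\<lambda>y. f y t) has_real_derivative fx x t) (at x) \<and>
        ((\<lambda>y. fx y t) has_real_derivative fxx x t) (at x)) \<and>
     (\<forall>t\<in>{0..T}.
        integrable lborel (\<lambda>x. f x t) \<and> integrable lborel (\<lambda>x. ft x t) \<and>
        integrable lborel (\<lambda>x. fx x t) \<and> integrable lborel (\<lambda>x. fxx x t)) \<and>
     (\<forall>t0\<in>{0..T}. \<exists>e>0. \<exists>g. integrable lborel g \<and>
        (\<forall>x. \<forall>s\<in>{0..T}. \<bar>s - t0\<bar> < e \<longrightarrow> \<bar>ft x s\<bar> \<le> g x)) \<and>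
     (\<forall>t\<in>{0..T}.
        ((\<lambda>x. f x t) \<longlongrightarrow> 0) at_top \<and> ((\<lambda>x. f x t) \<longlongrightarrow> 0) at_bot \<and>
        ((\<lambda>x. fx x t) \<longlongrightarrow> 0) at_top \<and> ((\<lambda>x. fx x t) \<longlongrightarrow> 0) at_bot)"

definition coef_a :: "real \<Rightarrow> (real \<Rightarrow> real) \<Rightarrow> (real \<Rightarrow> real \<Rightarrow> real) \<Rightarrow> real \<Rightarrow> real" where
  "coef_a \<kappa> p f t = (LINT x|lborel. (\<kappa> - p x) * f x t)"

definition coef_b :: "(real \<Rightarrow> real) \<Rightarrow> (real \<Rightarrow> real \<Rightarrow> real) \<Rightarrow> real \<Rightarrow> real" where
  "coef_b p f t = (LINT x|lborel. p x * f x t) * (LINT x|lborel. (1 - p x) * f x t)"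

text \<open>The PDE
  d_t f + (M-1)/sqrt tau * a(t) d_x(p f) - (M-1)^2/2 (a(t)^2 + b(t)/(M-1)) d_xx(p f) = 0
  on R x [0,T], with d_x(p f) = p' f + p f_x and d_xx(p f) = p'' f + 2 p' f_x + p f_xx.\<close>
definition solves_pde ::
  "real \<Rightarrow> real \<Rightarrow> real \<Rightarrow> real \<Rightarrow> (real \<Rightarrow> real) \<Rightarrow> (real \<Rightarrow> real) \<Rightarrow> (real \<Rightarrow> real)
     \<Rightarrow> (real \<Rightarrow> real \<Rightarrow> real) \<Rightarrow> (real \<Rightarrow> real \<Rightarrow> real) \<Rightarrow> (real \<Rightarrow> real \<Rightarrow> real)
     \<Rightarrow> (real \<Rightarrow> real \<Rightarrow> real) \<Rightarrow> bool" where
  "solves_pde M \<tau> \<kappa> T p p1 p2 f ft fx fxx \<longleftrightarrow>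
     (\<forall>t\<in>{0..T}. \<forall>x.
        ft x t
        + (M - 1) / sqrt \<tau> * coef_a \<kappa> p f t * (p1 x * f x t + p x * fx x t)
        - (M - 1)\<^sup>2 / 2 * ((coef_a \<kappa> p f t)\<^sup>2 + coef_b p f t / (M - 1))
            * (p2 x * f x t + 2 * p1 x * fx x t + p x * fxx x t) = 0)"

end

theory Submission
  imports Defs
begin
lemma integrable_bdd_mult:
  fixes g f :: "real \<Rightarrow> real"
  assumes "integrable lborel f" "continuous_on UNIV g" "\<And>x. \<bar>g x\<bar> \<le> B"
  shows "integrable lborel (\<lambda>x. g x * f x)"
proof (rule Bochner_Integration.integrable_bound[of lborel "\<lambda>x. B * \<bar>f x\<bar>"])
  show "integrable lborel (\<lambda>x. B * \<bar>f x\<bar>)" using assms(1) by auto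
  have "g \<in> borel_measurable lborel" using borel_measurable_continuous_onI[OF assms(2)] by simp
  then show "(\<lambda>x. g x * f x) \<in> borel_measurable lborel" using assms(1) by measurable
  show "AE x in lborel. norm (g x * f x) \<le> norm (B * \<bar>f x\<bar>)"
  proof (intro AE_I2)
    fix x
    have "\<bar>g x\<bar> * \<bar>f x\<bar> \<le> B * \<bar>f x\<bar>" using assms(3)[of x] by (intro mult_right_mono) auto
    moreover have "0 \<le> B" using assms(3)[of x] by linarith
    ultimately show "norm (g x * f x) \<le> norm (B * \<bar>f x\<bar>)" by (simp add: abs_mult)
  qed
qed

lemma int_deriv_zero:
  fixes G G' :: "real \<Rightarrow> real"
  assumes d: "\<And>x. (G has_real_derivative G' x) (at x)" and i: "integrable lborel G'"
    and lt: "(G \<longlongrightarrow> 0) at_top" and lb: "(G \<longlongrightarrow> 0) at_bot"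
  shows "(LINT x|lborel. G' x) = 0"
proof -
  have meas: "G' \<in> borel_measurable lborel" using i by auto
  have eq: "(LINT x|lborel. indicator {- real n..real n} x * G' x) = G (real n) - G (- real n)" for n :: nat
  proof -
    have si: "set_integrable lborel {- real n..real n} G'"
      unfolding set_integrable_def
      by (rule integrable_mult_indicator) (use i in auto)
    have "(G' has_integral (G (real n) - G (- real n))) {- real n..real n}"
      by (rule fundamental_theorem_of_calculus)
         (auto intro: has_field_derivative_imp_has_derivative DERIV_subset[OF d]
               simp: has_real_derivative_iff_has_vector_derivative[symmetric])
    then have "integral {- real n..real n} G' = G (real n) - G (- real n)" by (rule integral_unique)
    moreover have "(LINT x : {- real n..real n} | lborel. G' x) = integral {- real n..real n} G'"
      by (rule set_borel_integral_eq_integral(2)[OF si])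
    ultimately show ?thesis unfolding set_lebesgue_integral_def by simp
  qed
  have lim1: "(\<lambda>n. LINT x|lborel. indicator {- real n..real n} x * G' x) \<longlonglongrightarrow> (LINT x|lborel. G' x)"
  proof (rule integral_dominated_convergence[where w="\<lambda>x. \<bar>G' x\<bar>"])
    show "G' \<in> borel_measurable lborel" by (rule meas)
    show "(\<lambda>x. indicator {- real n..real n} x * G' x) \<in> borel_measurable lborel" for n
      using meas by measurable
    show "integrable lborel (\<lambda>x. \<bar>G' x\<bar>)" using i by auto
    show "AE x in lborel. (\<lambda>n. indicator {- real n..real n} x * G' x) \<longlonglongrightarrow> G' x"
    proof (intro AE_I2)
      fix x :: real
      obtain N :: nat where "\<bar>x\<bar> \<le> real N" using real_arch_simple by blast
      then have "\<forall>n\<ge>N. indicator {- real n..real n} x * G' x = G' x"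
        by (auto simp: indicator_def)
      then show "(\<lambda>n. indicator {- real n..real n} x * G' x) \<longlonglongrightarrow> G' x"
        by (intro tendsto_eventually) (auto simp: eventually_sequentially)
    qed
    show "AE x in lborel. norm (indicator {- real n..real n} x * G' x) \<le> \<bar>G' x\<bar>" for n
      by (intro AE_I2) (auto simp: indicator_def)
  qed
  have lim2: "(\<lambda>n. G (real n) - G (- real n)) \<longlonglongrightarrow> 0 - 0"
  proof (intro tendsto_diff)
    show "(\<lambda>n. G (real n)) \<longlonglongrightarrow> 0"
      by (rule filterlim_compose[OF lt filterlim_real_sequentially])
    show "(\<lambda>n. G (- real n)) \<longlonglongrightarrow> 0"
      by (rule filterlim_compose[OF lb filterlim_compose[OF filterlim_uminus_at_bot_at_top filterlim_real_sequentially]])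
  qed
  from lim1 lim2 show ?thesis unfolding eq by (simp add: LIMSEQ_unique)
qed
lemma deriv_under_int:
  fixes u ut :: "real \<Rightarrow> real \<Rightarrow> real" and g :: "real \<Rightarrow> real" and S :: "real set"
  assumes cS: "convex S" and t0: "t0 \<in> S"
    and d: "\<And>x s. s \<in> S \<Longrightarrow> ((\<lambda>s. u x s) has_real_derivative ut x s) (at s within S)"
    and iu: "\<And>s. s \<in> S \<Longrightarrow> integrable lborel (\<lambda>x. u x s)"
    and iut: "integrable lborel (\<lambda>x. ut x t0)"
    and e: "e > 0" and ig: "integrable lborel g"
    and bd: "\<And>x s. s \<in> S \<Longrightarrow> \<bar>s - t0\<bar> < e \<Longrightarrow> \<bar>ut x s\<bar> \<le> g x"
  shows "((\<lambda>s. LINT x|lborel. u x s) has_real_derivative (LINT x|lborel. ut x t0)) (at t0 within S)"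
proof -
  let ?S' = "S \<inter> ball t0 e"
  have cS': "convex ?S'" using cS by (intro convex_Int) auto
  have lip: "\<bar>u x s - u x t0\<bar> \<le> g x * \<bar>s - t0\<bar>" if "s \<in> S" "\<bar>s - t0\<bar> < e" for x s
  proof -
    have "norm (u x s - u x t0) \<le> g x * norm (s - t0)"
    proof (rule field_differentiable_bound[OF cS', of "\<lambda>s. u x s" "\<lambda>s. ut x s"])
      show "((\<lambda>s. u x s) has_field_derivative ut x z) (at z within ?S')" if "z \<in> ?S'" for z
        using d[of z x] that by (auto intro: DERIV_subset)
      show "norm (ut x z) \<le> g x" if "z \<in> ?S'" for z
        using bd[of z x] that by (auto simp: dist_real_def abs_minus_commute)
      show "s \<in> ?S'" using that by (auto simp: dist_real_def abs_minus_commute)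
      show "t0 \<in> ?S'" using t0 e by auto
    qed
    then show ?thesis by simp
  qed
  have quot: "(LINT x|lborel. (u x s - u x t0) / (s - t0)) = ((LINT x|lborel. u x s) - (LINT x|lborel. u x t0)) / (s - t0)"
    if "s \<in> S" for s
  proof -
    have "(LINT x|lborel. (u x s - u x t0) / (s - t0)) = (LINT x|lborel. u x s - u x t0) / (s - t0)"
      by (rule integral_divide_zero)
    also have "\<dots> = ((LINT x|lborel. u x s) - (LINT x|lborel. u x t0)) / (s - t0)"
      by (subst Bochner_Integration.integral_diff) (use iu[OF that] iu[OF t0] in auto)
    finally show ?thesis .
  qed
  show ?thesis
    unfolding has_field_derivative_iff
  proof (subst tendsto_at_iff_sequentially, intro allI impI)
    fix X :: "nat \<Rightarrow> real"
    assume XS: "\<forall>i. X i \<in> S - {t0}" and Xl: "X \<longlonglongrightarrow> t0"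
    from Xl e obtain N where N: "\<And>n. n \<ge> N \<Longrightarrow> dist (X n) t0 < e"
      unfolding lim_sequentially by blast
    have lim: "(\<lambda>n. LINT x|lborel. (u x (X (n + N)) - u x t0) / (X (n + N) - t0)) \<longlonglongrightarrow> (LINT x|lborel. ut x t0)"
    proof (rule integral_dominated_convergence[where w=g])
      show "(\<lambda>x. ut x t0) \<in> borel_measurable lborel" using iut by auto
      show "(\<lambda>x. (u x (X (n + N)) - u x t0) / (X (n + N) - t0)) \<in> borel_measurable lborel" for n
      proof -
        have "(\<lambda>x. u x (X (n + N))) \<in> borel_measurable lborel" using iu XS by auto
        moreover have "(\<lambda>x. u x t0) \<in> borel_measurable lborel" using iu[OF t0] by auto
        ultimately show ?thesis by measurable
      qed
      show "integrable lborel g" by (rule ig)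
      show "AE x in lborel. (\<lambda>n. (u x (X (n + N)) - u x t0) / (X (n + N) - t0)) \<longlonglongrightarrow> ut x t0"
      proof (intro AE_I2)
        fix x
        have "((\<lambda>s. (u x s - u x t0) / (s - t0)) \<longlongrightarrow> ut x t0) (at t0 within S)"
          using d[OF t0, of x] unfolding has_field_derivative_iff .
        then have "((\<lambda>s. (u x s - u x t0) / (s - t0)) \<circ> (\<lambda>n. X (n + N))) \<longlonglongrightarrow> ut x t0"
          by (rule tendsto_at_iff_sequentially[THEN iffD1, rule_format])
             (use XS LIMSEQ_ignore_initial_segment[OF Xl, of N] in auto)
        then show "(\<lambda>n. (u x (X (n + N)) - u x t0) / (X (n + N) - t0)) \<longlonglongrightarrow> ut x t0"
          by (simp add: o_def)
      qed
      show "AE x in lborel. norm ((u x (X (n + N)) - u x t0) / (X (n + N) - t0)) \<le> g x" for n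
      proof (intro AE_I2)
        fix x
        have XnS: "X (n + N) \<in> S" "X (n + N) \<noteq> t0" using XS by auto
        have "\<bar>X (n + N) - t0\<bar> < e" using N[of "n + N"] by (simp add: dist_real_def)
        from lip[OF XnS(1) this, of x] XnS(2)
        show "norm ((u x (X (n + N)) - u x t0) / (X (n + N) - t0)) \<le> g x"
          by (simp add: abs_divide divide_le_eq)
      qed
    qed
    have eqn: "(LINT x|lborel. (u x (X (n + N)) - u x t0) / (X (n + N) - t0)) =
      ((LINT x|lborel. u x (X (n + N))) - (LINT x|lborel. u x t0)) / (X (n + N) - t0)" for n
      using quot[of "X (n + N)"] XS by blast
    from lim have "(\<lambda>n. ((\<lambda>s. ((LINT x|lborel. u x s) - (LINT x|lborel. u x t0)) / (s - t0)) \<circ> X) (n + N)) \<longlonglongrightarrow> (LINT x|lborel. ut x t0)"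
      unfolding eqn by (simp add: o_def)
    then show "((\<lambda>s. ((LINT x|lborel. u x s) - (LINT x|lborel. u x t0)) / (s - t0)) \<circ> X) \<longlonglongrightarrow> (LINT x|lborel. ut x t0)"
      by (rule LIMSEQ_offset)
  qed
qed
lemma weak_forms:
  fixes p p1 p2 \<phi> \<phi>1 \<phi>2 F Fx Fxx :: "real \<Rightarrow> real"
  assumes dp: "\<And>x. (p has_real_derivative p1 x) (at x)"
    and dp1: "\<And>x. (p1 has_real_derivative p2 x) (at x)"
    and dphi: "\<And>x. (\<phi> has_real_derivative \<phi>1 x) (at x)"
    and dphi1: "\<And>x. (\<phi>1 has_real_derivative \<phi>2 x) (at x)"
    and dF: "\<And>x. (F has_real_derivative Fx x) (at x)"
    and dFx: "\<And>x. (Fx has_real_derivative Fxx x) (at x)"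
    and cp2: "continuous_on UNIV p2" and cphi2: "continuous_on UNIV \<phi>2"
    and bp: "\<And>x. \<bar>p x\<bar> \<le> c" and bp1: "\<And>x. \<bar>p1 x\<bar> \<le> c" and bp2: "\<And>x. \<bar>p2 x\<bar> \<le> c"
    and bphi: "\<And>x. \<bar>\<phi> x\<bar> \<le> B" and bphi1: "\<And>x. \<bar>\<phi>1 x\<bar> \<le> B" and bphi2: "\<And>x. \<bar>\<phi>2 x\<bar> \<le> B"
    and iF: "integrable lborel F" and iFx: "integrable lborel Fx" and iFxx: "integrable lborel Fxx"
    and F0: "(F \<longlongrightarrow> 0) at_top" "(F \<longlongrightarrow> 0) at_bot"
    and Fx0: "(Fx \<longlongrightarrow> 0) at_top" "(Fx \<longlongrightarrow> 0) at_bot"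
  shows "(LINT x|lborel. \<phi> x * (p1 x * F x + p x * Fx x)) = - (LINT x|lborel. \<phi>1 x * p x * F x)"
    and "(LINT x|lborel. \<phi> x * (p2 x * F x + 2 * p1 x * Fx x + p x * Fxx x)) = (LINT x|lborel. \<phi>2 x * p x * F x)"
proof -
  have cp: "continuous_on UNIV p" using dp by (intro continuous_at_imp_continuous_on ballI DERIV_isCont) auto
  have cp1: "continuous_on UNIV p1" using dp1 by (intro continuous_at_imp_continuous_on ballI DERIV_isCont) auto
  have cphi: "continuous_on UNIV \<phi>" using dphi by (intro continuous_at_imp_continuous_on ballI DERIV_isCont) auto
  have cphi1: "continuous_on UNIV \<phi>1" using dphi1 by (intro continuous_at_imp_continuous_on ballI DERIV_isCont) auto
  have c0: "0 \<le> c" using bp[of 0] by linarith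
  have B0: "0 \<le> B" using bphi[of 0] by linarith
  have bprod: "\<bar>a x * b x\<bar> \<le> A1 * A2" if "\<And>x. \<bar>a x\<bar> \<le> A1" "\<And>x. \<bar>b x\<bar> \<le> A2" for a b :: "real \<Rightarrow> real" and A1 A2 x
    using that[of x] by (simp add: abs_mult mult_mono')
  have i1: "integrable lborel (\<lambda>x. \<phi>1 x * p x * F x)"
    by (rule integrable_bdd_mult[OF iF, of _ "B * c"]) (auto intro!: continuous_intros cphi1 cp bprod[OF bphi1 bp])
  have i2: "integrable lborel (\<lambda>x. \<phi> x * p1 x * F x)"
    by (rule integrable_bdd_mult[OF iF, of _ "B * c"]) (auto intro!: continuous_intros cphi cp1 bprod[OF bphi bp1])
  have i3: "integrable lborel (\<lambda>x. \<phi> x * p x * Fx x)"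
    by (rule integrable_bdd_mult[OF iFx, of _ "B * c"]) (auto intro!: continuous_intros cphi cp bprod[OF bphi bp])
  have i4: "integrable lborel (\<lambda>x. \<phi>2 x * p x * F x)"
    by (rule integrable_bdd_mult[OF iF, of _ "B * c"]) (auto intro!: continuous_intros cphi2 cp bprod[OF bphi2 bp])
  have i5: "integrable lborel (\<lambda>x. \<phi> x * p2 x * F x)"
    by (rule integrable_bdd_mult[OF iF, of _ "B * c"]) (auto intro!: continuous_intros cphi cp2 bprod[OF bphi bp2])
  have i6: "integrable lborel (\<lambda>x. \<phi> x * p1 x * Fx x)"
    by (rule integrable_bdd_mult[OF iFx, of _ "B * c"]) (auto intro!: continuous_intros cphi cp1 bprod[OF bphi bp1])
  have i7: "integrable lborel (\<lambda>x. \<phi> x * p x * Fxx x)"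
    by (rule integrable_bdd_mult[OF iFxx, of _ "B * c"]) (auto intro!: continuous_intros cphi cp bprod[OF bphi bp])
  have lim0: "((\<lambda>x. a x * H x) \<longlongrightarrow> 0) F'" if "\<And>x. \<bar>a x\<bar> \<le> A" "(H \<longlongrightarrow> 0) F'" for a H :: "real \<Rightarrow> real" and A F'
  proof (rule Lim_null_comparison[where g="\<lambda>x. A * \<bar>H x\<bar>"])
    show "\<forall>\<^sub>F x in F'. norm (a x * H x) \<le> A * \<bar>H x\<bar>"
      using that(1) by (intro always_eventually allI) (simp add: abs_mult mult_right_mono)
    show "((\<lambda>x. A * \<bar>H x\<bar>) \<longlongrightarrow> 0) F'"
      using tendsto_mult_right_zero[OF tendsto_rabs_zero[OF that(2)], of A] by simp
  qed
  let ?G = "\<lambda>x. \<phi> x * p x * F x"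
  let ?G' = "\<lambda>x. \<phi>1 x * p x * F x + (\<phi> x * p1 x * F x + \<phi> x * p x * Fx x)"
  have dG: "(?G has_real_derivative ?G' x) (at x)" for x
    by (rule derivative_eq_intros dphi dp dF refl | simp add: algebra_simps)+
  have "(LINT x|lborel. ?G' x) = 0"
  proof (rule int_deriv_zero[OF dG])
    show "integrable lborel ?G'" using i1 i2 i3 by auto
    show "(?G \<longlongrightarrow> 0) at_top" by (rule lim0[OF _ F0(1)]) (auto intro!: bprod[OF bphi bp])
    show "(?G \<longlongrightarrow> 0) at_bot" by (rule lim0[OF _ F0(2)]) (auto intro!: bprod[OF bphi bp])
  qed
  moreover have "(LINT x|lborel. ?G' x) = (LINT x|lborel. \<phi>1 x * p x * F x) + (LINT x|lborel. \<phi> x * (p1 x * F x + p x * Fx x))"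
    using i1 i2 i3 by (simp add: algebra_simps)
  ultimately show "(LINT x|lborel. \<phi> x * (p1 x * F x + p x * Fx x)) = - (LINT x|lborel. \<phi>1 x * p x * F x)"
    by linarith
  let ?H = "\<lambda>x. \<phi> x * (p1 x * F x + p x * Fx x) - \<phi>1 x * p x * F x"
  let ?H' = "\<lambda>x. (\<phi> x * p2 x * F x + 2 * (\<phi> x * p1 x * Fx x) + \<phi> x * p x * Fxx x) - \<phi>2 x * p x * F x"
  have dH: "(?H has_real_derivative ?H' x) (at x)" for x
    by (rule derivative_eq_intros dphi dphi1 dp dp1 dF dFx refl | simp add: algebra_simps)+
  have "(LINT x|lborel. ?H' x) = 0"
  proof (rule int_deriv_zero[OF dH])
    show "integrable lborel ?H'" using i4 i5 i6 i7 by auto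
    have e: "?H = (\<lambda>x. (\<phi> x * p1 x) * F x + (\<phi> x * p x) * Fx x - (\<phi>1 x * p x) * F x)"
      by (simp add: algebra_simps)
    show "(?H \<longlongrightarrow> 0) at_top" unfolding e
      by (intro tendsto_diff[where a=0 and b=0, simplified] tendsto_add[where a=0 and b=0, simplified]
          lim0[OF _ F0(1)] lim0[OF _ Fx0(1)]) (auto intro!: bprod[OF bphi bp] bprod[OF bphi bp1] bprod[OF bphi1 bp])
    show "(?H \<longlongrightarrow> 0) at_bot" unfolding e
      by (intro tendsto_diff[where a=0 and b=0, simplified] tendsto_add[where a=0 and b=0, simplified]
          lim0[OF _ F0(2)] lim0[OF _ Fx0(2)]) (auto intro!: bprod[OF bphi bp] bprod[OF bphi bp1] bprod[OF bphi1 bp])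
  qed
  moreover have "(LINT x|lborel. ?H' x) = (LINT x|lborel. \<phi> x * (p2 x * F x + 2 * p1 x * Fx x + p x * Fxx x)) - (LINT x|lborel. \<phi>2 x * p x * F x)"
  proof -
    have e2: "?H' = (\<lambda>x. \<phi> x * (p2 x * F x + 2 * p1 x * Fx x + p x * Fxx x) - \<phi>2 x * p x * F x)"
      by (rule ext) (simp add: algebra_simps)
    have e3: "(\<lambda>x. \<phi> x * (p2 x * F x + 2 * p1 x * Fx x + p x * Fxx x)) = (\<lambda>x. \<phi> x * p2 x * F x + 2 * (\<phi> x * p1 x * Fx x) + \<phi> x * p x * Fxx x)"
      by (rule ext) (simp add: algebra_simps)
    have iS: "integrable lborel (\<lambda>x. \<phi> x * (p2 x * F x + 2 * p1 x * Fx x + p x * Fxx x))"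
      unfolding e3 using i5 i6 i7 by auto
    show ?thesis unfolding e2 by (rule Bochner_Integration.integral_diff[OF iS i4])
  qed
  ultimately show "(LINT x|lborel. \<phi> x * (p2 x * F x + 2 * p1 x * Fx x + p x * Fxx x)) = (LINT x|lborel. \<phi>2 x * p x * F x)"
    by linarith
qed
lemma deriv_phi:
  fixes \<phi> \<phi>1 \<phi>2 :: "real \<Rightarrow> real"
  assumes ap: "admissible_p cp pmin p p1 p2" and rs: "regular_sol T f ft fx fxx"
    and pde: "solves_pde M \<tau> \<kappa> T p p1 p2 f ft fx fxx"
    and dphi: "\<And>x. (\<phi> has_real_derivative \<phi>1 x) (at x)"
    and dphi1: "\<And>x. (\<phi>1 has_real_derivative \<phi>2 x) (at x)"
    and cphi2: "continuous_on UNIV \<phi>2"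
    and bphi: "\<And>x. \<bar>\<phi> x\<bar> \<le> B" and bphi1: "\<And>x. \<bar>\<phi>1 x\<bar> \<le> B" and bphi2: "\<And>x. \<bar>\<phi>2 x\<bar> \<le> B"
    and t: "t \<in> {0..T}" and cp0: "cp \<ge> 0"
  shows "((\<lambda>s. LINT x|lborel. \<phi> x * f x s) has_real_derivative
           ((M - 1) / sqrt \<tau> * coef_a \<kappa> p f t * (LINT x|lborel. \<phi>1 x * p x * f x t)
            + (M - 1)\<^sup>2 / 2 * ((coef_a \<kappa> p f t)\<^sup>2 + coef_b p f t / (M - 1)) * (LINT x|lborel. \<phi>2 x * p x * f x t)))
         (at t within {0..T})"
proof -
  let ?A = "(M - 1) / sqrt \<tau> * coef_a \<kappa> p f t"
  let ?D = "(M - 1)\<^sup>2 / 2 * ((coef_a \<kappa> p f t)\<^sup>2 + coef_b p f t / (M - 1))"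
  have pmin: "pmin \<ge> 0" and dp: "\<And>x. (p has_real_derivative p1 x) (at x)"
    and dp1: "\<And>x. (p1 has_real_derivative p2 x) (at x)" and cp2: "continuous_on UNIV p2"
    and prange: "\<And>x. pmin < p x \<and> p x \<le> 1"
    and pb: "\<And>x. 0 \<le> p1 x \<and> p1 x \<le> cp * (1 - p x) \<and> \<bar>p2 x\<bar> \<le> cp * (1 - p x)"
    using ap unfolding admissible_p_def by auto
  have bp: "\<bar>p x\<bar> \<le> 1 + cp" for x using prange[of x] pmin cp0 by auto
  have bp1: "\<bar>p1 x\<bar> \<le> 1 + cp" for x
  proof -
    have "cp * (1 - p x) \<le> cp * 1" using prange[of x] pmin cp0 by (intro mult_left_mono) auto
    then show ?thesis using pb[of x] by auto
  qed
  have bp2: "\<bar>p2 x\<bar> \<le> 1 + cp" for x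
  proof -
    have "cp * (1 - p x) \<le> cp * 1" using prange[of x] pmin cp0 by (intro mult_left_mono) auto
    then show ?thesis using pb[of x] by auto
  qed
  have cp: "continuous_on UNIV p" using dp by (intro continuous_at_imp_continuous_on ballI DERIV_isCont) auto
  have cp1: "continuous_on UNIV p1" using dp1 by (intro continuous_at_imp_continuous_on ballI DERIV_isCont) auto
  have cphi: "continuous_on UNIV \<phi>" using dphi by (intro continuous_at_imp_continuous_on ballI DERIV_isCont) auto
  have rs1: "\<And>s x. s \<in> {0..T} \<Longrightarrow> ((\<lambda>s. f x s) has_real_derivative ft x s) (at s within {0..T})"
    and rs2: "\<And>x. ((\<lambda>y. f y t) has_real_derivative fx x t) (at x)"
    and rs3: "\<And>x. ((\<lambda>y. fx y t) has_real_derivative fxx x t) (at x)"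
    using rs t unfolding regular_sol_def by auto
  have ints: "\<And>s. s \<in> {0..T} \<Longrightarrow> integrable lborel (\<lambda>x. f x s) \<and> integrable lborel (\<lambda>x. ft x s) \<and>
        integrable lborel (\<lambda>x. fx x s) \<and> integrable lborel (\<lambda>x. fxx x s)"
    using rs unfolding regular_sol_def by auto
  obtain e g where e: "e > 0" and ig: "integrable lborel g"
    and gb: "\<And>x s. s \<in> {0..T} \<Longrightarrow> \<bar>s - t\<bar> < e \<Longrightarrow> \<bar>ft x s\<bar> \<le> g x"
    using rs t unfolding regular_sol_def by fastforce
  have lims: "((\<lambda>x. f x t) \<longlongrightarrow> 0) at_top" "((\<lambda>x. f x t) \<longlongrightarrow> 0) at_bot"
      "((\<lambda>x. fx x t) \<longlongrightarrow> 0) at_top" "((\<lambda>x. fx x t) \<longlongrightarrow> 0) at_bot"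
    using rs t unfolding regular_sol_def by auto
  have B0: "0 \<le> B" using bphi[of 0] by linarith
  have d1: "((\<lambda>s. LINT x|lborel. \<phi> x * f x s) has_real_derivative (LINT x|lborel. \<phi> x * ft x t)) (at t within {0..T})"
  proof (rule deriv_under_int[where e=e and g="\<lambda>x. B * g x"])
    show "convex {0..T}" by simp
    show "t \<in> {0..T}" by (rule t)
    show "((\<lambda>s. \<phi> x * f x s) has_real_derivative \<phi> x * ft x s) (at s within {0..T})" if "s \<in> {0..T}" for x s
      by (rule DERIV_cmult[OF rs1[OF that]])
    show "integrable lborel (\<lambda>x. \<phi> x * f x s)" if "s \<in> {0..T}" for s
      using ints[OF that] by (intro integrable_bdd_mult[OF _ cphi bphi]) auto
    show "integrable lborel (\<lambda>x. \<phi> x * ft x t)"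
      using ints[OF t] by (intro integrable_bdd_mult[OF _ cphi bphi]) auto
    show "e > 0" by (rule e)
    show "integrable lborel (\<lambda>x. B * g x)" using ig by auto
    show "\<bar>\<phi> x * ft x s\<bar> \<le> B * g x" if "s \<in> {0..T}" "\<bar>s - t\<bar> < e" for x s
      using gb[OF that, of x] bphi[of x] by (simp add: abs_mult mult_mono')
  qed
  let ?F1 = "\<lambda>x. p1 x * f x t + p x * fx x t"
  let ?F2 = "\<lambda>x. p2 x * f x t + 2 * p1 x * fx x t + p x * fxx x t"
  have iF1: "integrable lborel ?F1"
    using ints[OF t] by (intro Bochner_Integration.integrable_add integrable_bdd_mult[OF _ cp1 bp1] integrable_bdd_mult[OF _ cp bp]) auto
  have iF2: "integrable lborel ?F2"
  proof -
    have bp1': "\<bar>2 * p1 x\<bar> \<le> 2 * (1 + cp)" for x using bp1[of x] by simp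
    have "integrable lborel (\<lambda>x. 2 * p1 x * fx x t)"
      using ints[OF t] by (intro integrable_bdd_mult[OF _ _ bp1']) (auto intro!: continuous_intros cp1)
    then show ?thesis
      using ints[OF t] by (intro Bochner_Integration.integrable_add integrable_bdd_mult[OF _ cp2 bp2] integrable_bdd_mult[OF _ cp bp]) auto
  qed
  have iP1: "integrable lborel (\<lambda>x. \<phi> x * ?F1 x)" by (rule integrable_bdd_mult[OF iF1 cphi bphi])
  have iP2: "integrable lborel (\<lambda>x. \<phi> x * ?F2 x)" by (rule integrable_bdd_mult[OF iF2 cphi bphi])
  have ftx: "\<phi> x * ft x t = - (?A * (\<phi> x * ?F1 x)) + ?D * (\<phi> x * ?F2 x)" for x
  proof -
    have "ft x t + ?A * ?F1 x - ?D * ?F2 x = 0"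
      using pde t unfolding solves_pde_def by blast
    then have h: "ft x t = - (?A * ?F1 x) + ?D * ?F2 x" by linarith
    have gen: "\<And>(u::real) a b d e. u * (- (a * b) + d * e) = - (a * (u * b)) + d * (u * e)" by algebra
    show ?thesis unfolding h by (rule gen)
  qed
  have "(LINT x|lborel. \<phi> x * ft x t) = - (?A * (LINT x|lborel. \<phi> x * ?F1 x)) + ?D * (LINT x|lborel. \<phi> x * ?F2 x)"
    unfolding ftx using iP1 iP2 by simp
  also have "\<dots> = ?A * (LINT x|lborel. \<phi>1 x * p x * f x t) + ?D * (LINT x|lborel. \<phi>2 x * p x * f x t)"
  proof -
    note wf = weak_forms[OF dp dp1 dphi dphi1 rs2 rs3 cp2 cphi2 bp bp1 bp2 bphi bphi1 bphi2 _ _ _ lims]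
    have w1: "(LINT x|lborel. \<phi> x * ?F1 x) = - (LINT x|lborel. \<phi>1 x * p x * f x t)"
      by (rule wf(1)) (use ints[OF t] in auto)
    have w2: "(LINT x|lborel. \<phi> x * ?F2 x) = (LINT x|lborel. \<phi>2 x * p x * f x t)"
      by (rule wf(2)) (use ints[OF t] in auto)
    show ?thesis unfolding w1 w2 by simp
  qed
  finally show ?thesis using d1 by simp
qed
lemma ptwise:
  fixes P P1 P2 cp :: real
  assumes P: "0 < P" "P \<le> 1" and P1: "0 \<le> P1" "P1 \<le> cp * (1 - P)"
    and P2: "\<bar>P2\<bar> \<le> cp * (1 - P)" and cp: "0 \<le> cp"
  shows "\<bar>P1 * P\<bar> \<le> (cp + 2 * cp\<^sup>2) * ((1 - P) * P)"
    and "\<bar>P2 * P\<bar> \<le> (cp + 2 * cp\<^sup>2) * ((1 - P) * P)"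
    and "\<bar>P1 * (1 - 2 * P) * P\<bar> \<le> (cp + 2 * cp\<^sup>2) * ((1 - P) * P)"
    and "\<bar>(P2 * (1 - 2 * P) - 2 * P1\<^sup>2) * P\<bar> \<le> (cp + 2 * cp\<^sup>2) * ((1 - P) * P)"
proof -
  have q0: "0 \<le> (1 - P) * P" using P by simp
  have cK: "cp * ((1 - P) * P) \<le> (cp + 2 * cp\<^sup>2) * ((1 - P) * P)"
    using q0 by (intro mult_right_mono) auto
  have a1: "\<bar>P1\<bar> * P \<le> cp * ((1 - P) * P)"
    using P P1 mult_right_mono[OF P1(2), of P] by (simp add: mult.assoc)
  have a2: "\<bar>P2\<bar> * P \<le> cp * ((1 - P) * P)"
    using P mult_right_mono[OF P2, of P] by (simp add: mult.assoc)
  have h12: "\<bar>1 - 2 * P\<bar> \<le> 1" using P by auto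
  have "\<bar>P1 * P\<bar> = \<bar>P1\<bar> * P" using P by (simp add: abs_mult)
  then show "\<bar>P1 * P\<bar> \<le> (cp + 2 * cp\<^sup>2) * ((1 - P) * P)" using a1 cK by linarith
  have "\<bar>P2 * P\<bar> = \<bar>P2\<bar> * P" using P by (simp add: abs_mult)
  then show "\<bar>P2 * P\<bar> \<le> (cp + 2 * cp\<^sup>2) * ((1 - P) * P)" using a2 cK by linarith
  have "\<bar>P1 * (1 - 2 * P) * P\<bar> = \<bar>1 - 2 * P\<bar> * (\<bar>P1\<bar> * P)" using P by (simp add: abs_mult)
  also have "\<dots> \<le> 1 * (\<bar>P1\<bar> * P)" using P by (intro mult_right_mono h12) auto
  finally show "\<bar>P1 * (1 - 2 * P) * P\<bar> \<le> (cp + 2 * cp\<^sup>2) * ((1 - P) * P)" using a1 cK by linarith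
  have b1: "\<bar>P2 * (1 - 2 * P) * P\<bar> \<le> cp * ((1 - P) * P)"
  proof -
    have "\<bar>P2 * (1 - 2 * P) * P\<bar> = \<bar>1 - 2 * P\<bar> * (\<bar>P2\<bar> * P)" using P by (simp add: abs_mult)
    also have "\<dots> \<le> 1 * (\<bar>P2\<bar> * P)" using P by (intro mult_right_mono h12) auto
    finally show ?thesis using a2 by linarith
  qed
  have sq: "P1\<^sup>2 \<le> (cp * (1 - P))\<^sup>2" using P1 by (intro power_mono) auto
  have sq2: "(cp * (1 - P))\<^sup>2 \<le> cp\<^sup>2 * (1 - P)"
  proof -
    have "(cp * (1 - P))\<^sup>2 = cp\<^sup>2 * ((1 - P) * (1 - P))" by (simp add: power2_eq_square)
    also have "\<dots> \<le> cp\<^sup>2 * ((1 - P) * 1)" using P by (intro mult_left_mono) auto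
    finally show ?thesis by simp
  qed
  have b2: "\<bar>2 * P1\<^sup>2 * P\<bar> \<le> 2 * cp\<^sup>2 * ((1 - P) * P)"
  proof -
    have "\<bar>2 * P1\<^sup>2 * P\<bar> = 2 * (P1\<^sup>2 * P)" using P by (simp add: abs_mult)
    also have "\<dots> \<le> 2 * ((cp\<^sup>2 * (1 - P)) * P)" using sq sq2 P by (intro mult_left_mono mult_right_mono) auto
    finally show ?thesis by (simp add: mult.assoc)
  qed
  have "\<bar>(P2 * (1 - 2 * P) - 2 * P1\<^sup>2) * P\<bar> \<le> \<bar>P2 * (1 - 2 * P) * P\<bar> + \<bar>2 * P1\<^sup>2 * P\<bar>"
    by (simp add: left_diff_distrib abs_triangle_ineq4)
  also have "\<dots> \<le> cp * ((1 - P) * P) + 2 * cp\<^sup>2 * ((1 - P) * P)" using b1 b2 by linarith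
  also have "\<dots> = (cp + 2 * cp\<^sup>2) * ((1 - P) * P)" by (simp add: algebra_simps)
  finally show "\<bar>(P2 * (1 - 2 * P) - 2 * P1\<^sup>2) * P\<bar> \<le> (cp + 2 * cp\<^sup>2) * ((1 - P) * P)" .
qed
lemma bprod_top:
  fixes a b :: "real \<Rightarrow> real"
  assumes "\<And>x. \<bar>a x\<bar> \<le> A1" "\<And>x. \<bar>b x\<bar> \<le> A2"
  shows "\<bar>a x * b x\<bar> \<le> A1 * A2"
  using assms[of x] by (simp add: abs_mult mult_mono')

lemma ptf: "\<bar>a\<bar> \<le> b \<Longrightarrow> 0 \<le> (F::real) \<Longrightarrow> \<bar>a * F\<bar> \<le> b * F"
  by (simp add: abs_mult mult_right_mono)

theorem lemma4p2:
  fixes M \<tau> cp :: real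
  assumes "M > 1" and "\<tau> > 0" and "cp > 0"
  shows "\<exists>c0. \<forall>(\<kappa>::real) (T::real) (pmin::real) p p1 p2 f0 f ft fx fxx.
     0 < \<kappa> \<and> \<kappa> < 1 \<and> T > 0 \<and>
     admissible_p cp pmin p p1 p2 \<and> admissible_f0 p f0 \<and>
     regular_sol T f ft fx fxx \<and> solves_pde M \<tau> \<kappa> T p p1 p2 f ft fx fxx \<and>
     (\<forall>t\<in>{0..T}. \<forall>x. 0 \<le> f x t) \<and> (\<forall>x. f x 0 = f0 x)
     \<longrightarrow>
     (let \<alpha> = (\<lambda>t. LINT x|lborel. p x * f x t);
          \<beta> = (\<lambda>t. LINT x|lborel. (1 - p x) * p x * f x t)
      in (\<forall>t\<in>{0<..<T}. \<alpha> differentiable (at t) \<and> \<beta> differentiable (at t) \<and>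
                         \<bar>deriv \<alpha> t\<bar> \<le> c0 * \<beta> t \<and> \<bar>deriv \<beta> t\<bar> \<le> c0 * \<beta> t) \<and>
         (\<forall>t\<in>{0<..T}. \<beta> t \<ge> \<beta> 0 * exp (- c0 * t)))"
proof -
  have M1: "M - 1 > 0" using assms(1) by simp
  have cp0: "cp \<ge> 0" using assms(3) by simp
  define K where "K = cp + 2 * cp\<^sup>2"
  define A0 where "A0 = (M - 1) / sqrt \<tau>"
  define D0 where "D0 = (M - 1)\<^sup>2 / 2 * (1 + 1 / (M - 1))"
  define c0 where "c0 = (A0 + D0) * K"
  have K0: "K \<ge> 0" unfolding K_def using cp0 by simp
  have A00: "A0 \<ge> 0" unfolding A0_def using M1 assms(2) by simp
  have D00: "D0 \<ge> 0" unfolding D0_def using M1 by simp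
  show ?thesis
  proof (rule exI[of _ c0], intro allI impI)
    fix \<kappa> T pmin :: real and p p1 p2 f0 :: "real \<Rightarrow> real" and f ft fx fxx :: "real \<Rightarrow> real \<Rightarrow> real"
    assume H: "0 < \<kappa> \<and> \<kappa> < 1 \<and> T > 0 \<and>
     admissible_p cp pmin p p1 p2 \<and> admissible_f0 p f0 \<and>
     regular_sol T f ft fx fxx \<and> solves_pde M \<tau> \<kappa> T p p1 p2 f ft fx fxx \<and>
     (\<forall>t\<in>{0..T}. \<forall>x. 0 \<le> f x t) \<and> (\<forall>x. f x 0 = f0 x)"
    have \<kappa>: "0 < \<kappa>" "\<kappa> < 1" and T0: "T > 0" using H by auto
    have ap: "admissible_p cp pmin p p1 p2" and af: "admissible_f0 p f0"
      and rs: "regular_sol T f ft fx fxx" and pde: "solves_pde M \<tau> \<kappa> T p p1 p2 f ft fx fxx"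
      and fnn: "\<And>t x. t \<in> {0..T} \<Longrightarrow> 0 \<le> f x t" and f00: "\<And>x. f x 0 = f0 x"
      using H by auto
    have pmin: "pmin \<ge> 0" and dp: "\<And>x. (p has_real_derivative p1 x) (at x)"
      and dp1: "\<And>x. (p1 has_real_derivative p2 x) (at x)" and cp2: "continuous_on UNIV p2"
      and prange: "\<And>x. pmin < p x \<and> p x \<le> 1"
      and pb: "\<And>x. 0 \<le> p1 x \<and> p1 x \<le> cp * (1 - p x) \<and> \<bar>p2 x\<bar> \<le> cp * (1 - p x)"
      using ap unfolding admissible_p_def by auto
    have cp: "continuous_on UNIV p" using dp by (intro continuous_at_imp_continuous_on ballI DERIV_isCont) auto
    have cp1: "continuous_on UNIV p1" using dp1 by (intro continuous_at_imp_continuous_on ballI DERIV_isCont) auto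
    have ppos: "0 < p x" "p x \<le> 1" for x using prange[of x] pmin by auto
    have p1b: "0 \<le> p1 x" "p1 x \<le> cp" for x
    proof -
      show "0 \<le> p1 x" using pb[of x] by auto
      have "cp * (1 - p x) \<le> cp * 1" using ppos[of x] cp0 by (intro mult_left_mono) auto
      then show "p1 x \<le> cp" using pb[of x] by auto
    qed
    have p2b: "\<bar>p2 x\<bar> \<le> cp" for x
    proof -
      have "cp * (1 - p x) \<le> cp * 1" using ppos[of x] cp0 by (intro mult_left_mono) auto
      then show ?thesis using pb[of x] by auto
    qed
    have intf: "\<And>t. t \<in> {0..T} \<Longrightarrow> integrable lborel (\<lambda>x. f x t)"
      using rs unfolding regular_sol_def by auto
    have f0i: "(LINT x|lborel. f0 x) = 1" using af unfolding admissible_f0_def by auto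
    have dm: "((\<lambda>s. LINT x|lborel. 1 * f x s) has_real_derivative
           ((M - 1) / sqrt \<tau> * coef_a \<kappa> p f t * (LINT x|lborel. 0 * p x * f x t)
            + (M - 1)\<^sup>2 / 2 * ((coef_a \<kappa> p f t)\<^sup>2 + coef_b p f t / (M - 1)) * (LINT x|lborel. 0 * p x * f x t)))
         (at t within {0..T})" if "t \<in> {0..T}" for t
      by (rule deriv_phi[OF ap rs pde, where B=1]) (use that in \<open>auto intro: cp0 derivative_eq_intros\<close>)
    have "\<exists>c. \<forall>t\<in>{0..T}. (LINT x|lborel. 1 * f x t) = c"
      by (rule has_field_derivative_zero_constant) (use dm in auto)
    then obtain cm where cm: "\<And>t. t \<in> {0..T} \<Longrightarrow> (LINT x|lborel. f x t) = cm" by auto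
    have mass: "(LINT x|lborel. f x t) = 1" if "t \<in> {0..T}" for t
    proof -
      have "(LINT x|lborel. f x 0) = cm" using cm[of 0] T0 by auto
      then have "cm = 1" using f0i f00 by simp
      then show ?thesis using cm[OF that] by simp
    qed
    have coefs: "\<bar>coef_a \<kappa> p f t\<bar> \<le> 1 \<and> 0 \<le> coef_b p f t \<and> coef_b p f t \<le> 1" if t: "t \<in> {0..T}" for t
    proof -
      have ka: "\<bar>\<kappa> - p x\<bar> \<le> 1" for x using ppos[of x] \<kappa> by auto
      have i1: "integrable lborel (\<lambda>x. (\<kappa> - p x) * f x t)"
        by (rule integrable_bdd_mult[OF intf[OF t] _ ka]) (auto intro!: continuous_intros cp)
      have "\<bar>coef_a \<kappa> p f t\<bar> \<le> (LINT x|lborel. f x t)"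
        unfolding coef_a_def
        by (rule integral_abs_bound_integral[OF i1 intf[OF t]]) (use ptf[OF ka fnn[OF t]] in simp)
      then have a1: "\<bar>coef_a \<kappa> p f t\<bar> \<le> 1" using mass[OF t] by simp
      have pb1: "\<bar>p x\<bar> \<le> 1" for x using ppos[of x] by auto
      have pb2: "\<bar>1 - p x\<bar> \<le> 1" for x using ppos[of x] by auto
      have ip: "integrable lborel (\<lambda>x. p x * f x t)"
        by (rule integrable_bdd_mult[OF intf[OF t] cp pb1])
      have iq: "integrable lborel (\<lambda>x. (1 - p x) * f x t)"
        by (rule integrable_bdd_mult[OF intf[OF t] _ pb2]) (auto intro!: continuous_intros cp)
      have I1: "0 \<le> (LINT x|lborel. p x * f x t)" "(LINT x|lborel. p x * f x t) \<le> 1"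
      proof -
        show "0 \<le> (LINT x|lborel. p x * f x t)"
          using ppos fnn[OF t] by (intro Bochner_Integration.integral_nonneg) (simp add: less_imp_le)
        have "(LINT x|lborel. p x * f x t) \<le> (LINT x|lborel. f x t)"
          by (intro integral_mono[OF ip intf[OF t]] mult_left_le_one_le fnn[OF t]) (auto simp: less_imp_le ppos)
        then show "(LINT x|lborel. p x * f x t) \<le> 1" using mass[OF t] by simp
      qed
      have I2: "0 \<le> (LINT x|lborel. (1 - p x) * f x t)" "(LINT x|lborel. (1 - p x) * f x t) \<le> 1"
      proof -
        show "0 \<le> (LINT x|lborel. (1 - p x) * f x t)"
          using ppos fnn[OF t] by (intro Bochner_Integration.integral_nonneg) simp
        have "(LINT x|lborel. (1 - p x) * f x t) \<le> (LINT x|lborel. f x t)"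
          by (intro integral_mono[OF iq intf[OF t]] mult_left_le_one_le fnn[OF t]) (auto simp: less_imp_le ppos)
        then show "(LINT x|lborel. (1 - p x) * f x t) \<le> 1" using mass[OF t] by simp
      qed
      show ?thesis unfolding coef_b_def using a1 I1 I2 by (simp add: mult_le_one)
    qed
    define Aa where "Aa t = (M - 1) / sqrt \<tau> * coef_a \<kappa> p f t" for t
    define Dd where "Dd t = (M - 1)\<^sup>2 / 2 * ((coef_a \<kappa> p f t)\<^sup>2 + coef_b p f t / (M - 1))" for t
    define \<alpha> where "\<alpha> = (\<lambda>t. LINT x|lborel. p x * f x t)"
    define \<beta> where "\<beta> = (\<lambda>t. LINT x|lborel. (1 - p x) * p x * f x t)"
    have Ab: "\<bar>Aa t\<bar> \<le> A0" if t: "t \<in> {0..T}" for t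
    proof -
      have "\<bar>Aa t\<bar> = A0 * \<bar>coef_a \<kappa> p f t\<bar>" unfolding Aa_def A0_def using M1 assms(2) by (simp add: abs_mult)
      also have "\<dots> \<le> A0 * 1" using coefs[OF t] A00 by (intro mult_left_mono) auto
      finally show ?thesis by simp
    qed
    have Db: "\<bar>Dd t\<bar> \<le> D0" if t: "t \<in> {0..T}" for t
    proof -
      have a2: "(coef_a \<kappa> p f t)\<^sup>2 \<le> 1" using coefs[OF t] by (simp add: abs_le_square_iff[symmetric] abs_square_le_1)
      have b2: "coef_b p f t / (M - 1) \<le> 1 / (M - 1)" using coefs[OF t] M1 by (intro divide_right_mono) auto
      have b3: "0 \<le> coef_b p f t / (M - 1)" using coefs[OF t] M1 by simp
      have "0 \<le> Dd t" unfolding Dd_def using b3 by simp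
      moreover have "Dd t \<le> D0" unfolding Dd_def D0_def using a2 b2 M1 by (intro mult_left_mono) auto
      ultimately show ?thesis by simp
    qed
    have beta0: "0 \<le> \<beta> t" if t: "t \<in> {0..T}" for t
      unfolding \<beta>_def by (intro Bochner_Integration.integral_nonneg mult_nonneg_nonneg fnn[OF t]) (auto simp: less_imp_le ppos)
    have iq: "integrable lborel (\<lambda>x. K * ((1 - p x) * p x) * f x t)" if t: "t \<in> {0..T}" for t
    proof -
      have "\<bar>K * ((1 - p x) * p x)\<bar> \<le> K" for x
      proof -
        have "\<bar>(1 - p x) * p x\<bar> \<le> 1" using ppos[of x] by (simp add: abs_mult mult_le_one)
        then show ?thesis using K0 by (simp add: abs_mult mult_left_le)
      qed
      then show ?thesis by (rule integrable_bdd_mult[OF intf[OF t], rotated]) (auto intro!: continuous_intros cp)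
    qed
    have intb: "\<bar>LINT x|lborel. h x\<bar> \<le> K * \<beta> t"
      if t: "t \<in> {0..T}" and ih: "integrable lborel h" and hb: "\<And>x. \<bar>h x\<bar> \<le> K * ((1 - p x) * p x) * f x t" for h t
    proof -
      have "\<bar>LINT x|lborel. h x\<bar> \<le> (LINT x|lborel. K * ((1 - p x) * p x) * f x t)"
        by (rule integral_abs_bound_integral[OF ih iq[OF t]]) (use hb in simp)
      also have "\<dots> = K * \<beta> t" unfolding \<beta>_def by (simp add: mult.assoc)
      finally show ?thesis .
    qed
    have vb: "\<bar>Aa t * I1 + Dd t * I2\<bar> \<le> c0 * \<beta> t"
      if t: "t \<in> {0..T}" and "\<bar>I1\<bar> \<le> K * \<beta> t" "\<bar>I2\<bar> \<le> K * \<beta> t" for t I1 I2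
    proof -
      have kb: "0 \<le> K * \<beta> t" using K0 beta0[OF t] by simp
      have "\<bar>Aa t * I1\<bar> \<le> A0 * (K * \<beta> t)" unfolding abs_mult
        by (rule mult_mono[OF Ab[OF t] that(2) A00 abs_ge_zero])
      moreover have "\<bar>Dd t * I2\<bar> \<le> D0 * (K * \<beta> t)" unfolding abs_mult
        by (rule mult_mono[OF Db[OF t] that(3) D00 abs_ge_zero])
      ultimately have "\<bar>Aa t * I1 + Dd t * I2\<bar> \<le> A0 * (K * \<beta> t) + D0 * (K * \<beta> t)" by linarith
      also have "\<dots> = c0 * \<beta> t" unfolding c0_def by (simp add: algebra_simps)
      finally show ?thesis .
    qed
    have pw: "\<bar>p1 x * p x\<bar> \<le> K * ((1 - p x) * p x)" "\<bar>p2 x * p x\<bar> \<le> K * ((1 - p x) * p x)"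
      "\<bar>p1 x * (1 - 2 * p x) * p x\<bar> \<le> K * ((1 - p x) * p x)"
      "\<bar>(p2 x * (1 - 2 * p x) - 2 * (p1 x)\<^sup>2) * p x\<bar> \<le> K * ((1 - p x) * p x)" for x
      unfolding K_def using ptwise[of "p x" "p1 x" cp "p2 x"] ppos[of x] pb[of x] cp0 by auto
    have Bp: "\<bar>p x\<bar> \<le> 1 + cp" "\<bar>p1 x\<bar> \<le> 1 + cp" "\<bar>p2 x\<bar> \<le> 1 + cp" for x
      using ppos[of x] p1b[of x] p2b[of x] cp0 by auto
    have da: "\<exists>V. (\<alpha> has_real_derivative V) (at t within {0..T}) \<and> \<bar>V\<bar> \<le> c0 * \<beta> t"
      if t: "t \<in> {0..T}" for t
    proof (intro exI conjI)
      show "(\<alpha> has_real_derivative (Aa t * (LINT x|lborel. p1 x * p x * f x t) + Dd t * (LINT x|lborel. p2 x * p x * f x t))) (at t within {0..T})"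
        unfolding \<alpha>_def Aa_def Dd_def
        by (rule deriv_phi[OF ap rs pde dp dp1 cp2 Bp t cp0])
      have i1: "integrable lborel (\<lambda>x. p1 x * p x * f x t)"
        by (rule integrable_bdd_mult[OF intf[OF t] _ bprod_top[OF Bp(2) Bp(1)]])
           (auto intro!: continuous_intros cp cp1)
      have i2: "integrable lborel (\<lambda>x. p2 x * p x * f x t)"
        by (rule integrable_bdd_mult[OF intf[OF t] _ bprod_top[OF Bp(3) Bp(1)]])
           (auto intro!: continuous_intros cp cp2)
      show "\<bar>Aa t * (LINT x|lborel. p1 x * p x * f x t) + Dd t * (LINT x|lborel. p2 x * p x * f x t)\<bar> \<le> c0 * \<beta> t"
        by (rule vb[OF t intb[OF t i1] intb[OF t i2]]) (use ptf[OF pw(1) fnn[OF t]] ptf[OF pw(2) fnn[OF t]] in auto)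
    qed
    let ?B = "1 + cp + 2 * cp\<^sup>2"
    have dq: "((\<lambda>x. (1 - p x) * p x) has_real_derivative p1 x * (1 - 2 * p x)) (at x)" for x
      by (rule derivative_eq_intros dp refl | simp add: algebra_simps)+
    have dq1: "((\<lambda>x. p1 x * (1 - 2 * p x)) has_real_derivative p2 x * (1 - 2 * p x) - 2 * (p1 x)\<^sup>2) (at x)" for x
      by (rule derivative_eq_intros dp dp1 refl | simp add: algebra_simps power2_eq_square)+
    have cq2: "continuous_on UNIV (\<lambda>x. p2 x * (1 - 2 * p x) - 2 * (p1 x)\<^sup>2)"
      by (auto intro!: continuous_intros cp cp1 cp2)
    have Bq: "\<bar>(1 - p x) * p x\<bar> \<le> ?B" "\<bar>p1 x * (1 - 2 * p x)\<bar> \<le> ?B"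
      "\<bar>p2 x * (1 - 2 * p x) - 2 * (p1 x)\<^sup>2\<bar> \<le> ?B" for x
    proof -
      have h12: "\<bar>1 - 2 * p x\<bar> \<le> 1" using ppos[of x] by auto
      have sq0: "0 \<le> cp\<^sup>2" by simp
      have "\<bar>(1 - p x) * p x\<bar> \<le> 1" using ppos[of x] by (simp add: abs_mult mult_le_one)
      then show "\<bar>(1 - p x) * p x\<bar> \<le> ?B" using cp0 sq0 by linarith
      have "\<bar>p1 x * (1 - 2 * p x)\<bar> \<le> cp * 1" unfolding abs_mult
        using p1b[of x] h12 cp0 by (intro mult_mono) auto
      then show "\<bar>p1 x * (1 - 2 * p x)\<bar> \<le> ?B" using cp0 sq0 by linarith
      have e1: "\<bar>p2 x * (1 - 2 * p x)\<bar> \<le> cp * 1" unfolding abs_mult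
        using p2b[of x] h12 cp0 by (intro mult_mono) auto
      have e2: "(p1 x)\<^sup>2 \<le> cp\<^sup>2" using p1b[of x] by (intro power_mono) auto
      have "\<bar>p2 x * (1 - 2 * p x) - 2 * (p1 x)\<^sup>2\<bar> \<le> \<bar>p2 x * (1 - 2 * p x)\<bar> + 2 * (p1 x)\<^sup>2"
        by (simp add: abs_triangle_ineq4 order_trans[OF abs_triangle_ineq4])
      then show "\<bar>p2 x * (1 - 2 * p x) - 2 * (p1 x)\<^sup>2\<bar> \<le> ?B" using e1 e2 by linarith
    qed
    have db: "\<exists>V. (\<beta> has_real_derivative V) (at t within {0..T}) \<and> \<bar>V\<bar> \<le> c0 * \<beta> t"
      if t: "t \<in> {0..T}" for t
    proof (intro exI conjI)
      show "(\<beta> has_real_derivative (Aa t * (LINT x|lborel. p1 x * (1 - 2 * p x) * p x * f x t)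
               + Dd t * (LINT x|lborel. (p2 x * (1 - 2 * p x) - 2 * (p1 x)\<^sup>2) * p x * f x t))) (at t within {0..T})"
        unfolding \<beta>_def Aa_def Dd_def
        by (rule deriv_phi[OF ap rs pde dq dq1 cq2 Bq t cp0])
      have i1: "integrable lborel (\<lambda>x. p1 x * (1 - 2 * p x) * p x * f x t)"
        by (rule integrable_bdd_mult[OF intf[OF t] _ bprod_top[OF Bq(2) Bp(1)]])
           (auto intro!: continuous_intros cp cp1)
      have i2: "integrable lborel (\<lambda>x. (p2 x * (1 - 2 * p x) - 2 * (p1 x)\<^sup>2) * p x * f x t)"
        by (rule integrable_bdd_mult[OF intf[OF t] _ bprod_top[OF Bq(3) Bp(1)]])
           (auto intro!: continuous_intros cp cp1 cp2)
      show "\<bar>Aa t * (LINT x|lborel. p1 x * (1 - 2 * p x) * p x * f x t)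
               + Dd t * (LINT x|lborel. (p2 x * (1 - 2 * p x) - 2 * (p1 x)\<^sup>2) * p x * f x t)\<bar> \<le> c0 * \<beta> t"
        by (rule vb[OF t intb[OF t i1] intb[OF t i2]]) (use ptf[OF pw(3) fnn[OF t]] ptf[OF pw(4) fnn[OF t]] in auto)
    qed
    have part1: "\<forall>t\<in>{0<..<T}. \<alpha> differentiable (at t) \<and> \<beta> differentiable (at t) \<and>
                   \<bar>deriv \<alpha> t\<bar> \<le> c0 * \<beta> t \<and> \<bar>deriv \<beta> t\<bar> \<le> c0 * \<beta> t"
    proof
      fix t assume t: "t \<in> {0<..<T}"
      then have t': "t \<in> {0..T}" by auto
      have at: "at t within {0..T} = at t" using t by (intro at_within_Icc_at) auto
      obtain Va where Va: "(\<alpha> has_real_derivative Va) (at t)" "\<bar>Va\<bar> \<le> c0 * \<beta> t"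
        using da[OF t'] unfolding at by blast
      obtain Vb where Vb: "(\<beta> has_real_derivative Vb) (at t)" "\<bar>Vb\<bar> \<le> c0 * \<beta> t"
        using db[OF t'] unfolding at by blast
      show "\<alpha> differentiable (at t) \<and> \<beta> differentiable (at t) \<and>
                   \<bar>deriv \<alpha> t\<bar> \<le> c0 * \<beta> t \<and> \<bar>deriv \<beta> t\<bar> \<le> c0 * \<beta> t"
        using Va Vb DERIV_imp_deriv[OF Va(1)] DERIV_imp_deriv[OF Vb(1)]
          differentiableI[OF has_field_derivative_imp_has_derivative[OF Va(1)]]
          differentiableI[OF has_field_derivative_imp_has_derivative[OF Vb(1)]]
        by auto
    qed
    have part2: "\<forall>t\<in>{0<..T}. \<beta> t \<ge> \<beta> 0 * exp (- c0 * t)"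
    proof
      fix t assume t: "t \<in> {0<..T}"
      have cb: "continuous_on {0..T} \<beta>"
      proof (rule DERIV_continuous_on)
        fix s assume "s \<in> {0..T}"
        from db[OF this] obtain V where "(\<beta> has_real_derivative V) (at s within {0..T})" by blast
        then show "(\<beta> has_real_derivative (SOME V. (\<beta> has_real_derivative V) (at s within {0..T}))) (at s within {0..T})"
          by (rule someI)
      qed
      have "\<beta> 0 * exp (c0 * 0) \<le> \<beta> t * exp (c0 * t)"
      proof (rule DERIV_nonneg_imp_increasing_open[of 0 t "\<lambda>s. \<beta> s * exp (c0 * s)"])
        show "0 \<le> t" using t by simp
        show "continuous_on {0..t} (\<lambda>s. \<beta> s * exp (c0 * s))"
          using t by (intro continuous_intros continuous_on_subset[OF cb]) auto
        fix s assume s: "0 < s" "s < t"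
        then have s': "s \<in> {0..T}" using t by auto
        have at: "at s within {0..T} = at s" using s t by (intro at_within_Icc_at) auto
        obtain V where V: "(\<beta> has_real_derivative V) (at s)" "\<bar>V\<bar> \<le> c0 * \<beta> s"
          using db[OF s'] unfolding at by blast
        have "((\<lambda>s. \<beta> s * exp (c0 * s)) has_real_derivative (V * exp (c0 * s) + \<beta> s * (exp (c0 * s) * c0))) (at s)"
          by (rule derivative_eq_intros V(1) refl | simp)+
        moreover have "0 \<le> V * exp (c0 * s) + \<beta> s * (exp (c0 * s) * c0)"
        proof -
          have "0 \<le> V + c0 * \<beta> s" using V(2) by linarith
          then have "0 \<le> (V + c0 * \<beta> s) * exp (c0 * s)" by simp
          then show ?thesis by (simp add: algebra_simps)
        qed
        ultimately show "\<exists>y. ((\<lambda>s. \<beta> s * exp (c0 * s)) has_real_derivative y) (at s) \<and> 0 \<le> y" by blast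
      qed
      then have "\<beta> 0 * exp (- c0 * t) \<le> \<beta> t * exp (c0 * t) * exp (- c0 * t)"
        by (intro mult_right_mono) auto
      also have "\<dots> = \<beta> t" by (simp add: mult.assoc flip: exp_add)
      finally show "\<beta> t \<ge> \<beta> 0 * exp (- c0 * t)" .
    qed
    show "let \<alpha> = (\<lambda>t. LINT x|lborel. p x * f x t);
          \<beta> = (\<lambda>t. LINT x|lborel. (1 - p x) * p x * f x t)
      in (\<forall>t\<in>{0<..<T}. \<alpha> differentiable (at t) \<and> \<beta> differentiable (at t) \<and>
                         \<bar>deriv \<alpha> t\<bar> \<le> c0 * \<beta> t \<and> \<bar>deriv \<beta> t\<bar> \<le> c0 * \<beta> t) \<and>
         (\<forall>t\<in>{0<..T}. \<beta> t \<ge> \<beta> 0 * exp (- c0 * t))"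
      using part1 part2 unfolding \<alpha>_def \<beta>_def Let_def by blast
  qed
qed

end
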